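(* There exists a constant $c_n>0$, depending only on $n$, such that for every open set $\Omega\subset\mathbb{R}^n$, every $(n-1)$-rectifiable set $M\subset\Omega$ with $\mathcal{H}^{n-1}(M)<\infty$, and every $\varepsilon>0$, $$\frac{1}{\mathcal{H}^{n(n-1)/2}(V_n)}\int_{V_n}d\nu\int_{\mathcal{Q}}dz\sum_{I\in\mathscr{E}_{\varepsilon,\nu,z}(\Omega)}\varepsilon^{n-1}\,\mathcal{H}^0(I\cap M)\le c_n\,\mathcal{H}^{n-1}(M).$$
   Context: $V_n$ is the set of orthonormal bases $\nu=(\nu_1,\dots,\nu_n)$ of $\mathbb{R}^n$, identified with $O(n)$ via the map $R_\nu$ sending the standard basis to $\nu$; it carries the measure $\mathcal{H}^{n(n-1)/2}$. $\mathcal{Q}:=(0,1)^n$. For $\varepsilon>0$, $\nu\in V_n$, $z\in\mathcal{Q}$ and open $\Omega$, define: - $\mathbb{Z}^n_{\varepsilon,\nu,z}(\Omega):=R_\nu(\varepsilon\mathbb{Z}^n+\varepsilon z)\cap\Omega$; - $\mathscr{C}_{\varepsilon,\nu,z}(\Omega):=\{j+R_\nu(\varepsilon\mathcal{Q}):j\in\mathbb{Z}^n_{\varepsilon,\nu,z}(\Omega),\ j+R_\nu(\varepsilon\mathcal{Q})\Subset\Omega\}$; - $\mathscr{E}_{\varepsilon,\nu,z}(\Omega)$ is the set of closed one-dimensional edges of cubes in $\mathscr{C}_{\varepsilon,\nu,z}(\Omega)$. $\mathcal{H}^0$ is the counting measure. *)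

theory Defs
  imports "HOL-Analysis.Analysis"
begin

definition hball_const :: "real \<Rightarrow> real" where
  "hball_const s = pi powr (s / 2) / Gamma (s / 2 + 1)"

definition hcost :: "real \<Rightarrow> 'a::metric_space set \<Rightarrow> real" where
  "hcost s S = (if S = {} then 0
                else if s = 0 then 1
                else hball_const s * (diameter S / 2) powr s)"

definition hausdorff_outer :: "real \<Rightarrow> 'a::metric_space set \<Rightarrow> ennreal" where
  "hausdorff_outer s A =
     (SUP \<delta>\<in>{0<..}. INF C \<in> {C :: nat \<Rightarrow> 'a set. A \<subseteq> (\<Union>i. C i) \<and>
                          (\<forall>i. bounded (C i) \<and> diameter (C i) \<le> \<delta>)}.
                  (\<Sum>i. ennreal (hcost s (C i))))"

definition hausdorff_measure :: "real \<Rightarrow> 'a::metric_space measure" where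
  "hausdorff_measure s = measure_of UNIV (sets borel) (hausdorff_outer s)"

text \<open>M is countably m-rectifiable: M is contained, up to an H^m-null set, in a
  countable union of Lipschitz images of R^m (here: of m-dimensional linear
  subspaces of the ambient space, which are isometric to R^m).\<close>
definition rectifiable :: "nat \<Rightarrow> 'a::euclidean_space set \<Rightarrow> bool" where
  "rectifiable m M \<longleftrightarrow>
     (\<exists>(M0::'a set) (T :: nat \<Rightarrow> 'a set) (f :: nat \<Rightarrow> 'a \<Rightarrow> 'a). hausdorff_outer (real m) M0 = 0 \<and>
        (\<forall>i. subspace (T i) \<and> dim (T i) = m \<and> (\<exists>L::real. L-lipschitz_on (T i) (f i))) \<and>
        M \<subseteq> M0 \<union> (\<Union>i. f i ` T i))"

definition unit_cube :: "(real^'n) set" where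
  "unit_cube = {x. \<forall>i. 0 < x $ i \<and> x $ i < 1}"

definition integer_vecs :: "(real^'n) set" where
  "integer_vecs = {k. \<forall>i. k $ i \<in> \<int>}"

text \<open>V_n identified with O(n); R sends the standard basis to the basis nu
  (the columns of R are nu_1 .. nu_n).\<close>
definition On :: "(real^'n^'n) set" where
  "On = {R. orthogonal_matrix R}"

definition lattice_pts :: "real \<Rightarrow> real^'n^'n \<Rightarrow> real^'n \<Rightarrow> (real^'n) set \<Rightarrow> (real^'n) set" where
  "lattice_pts \<epsilon> R z \<Omega> = {R *v (\<epsilon> *\<^sub>R (k + z)) | k. k \<in> integer_vecs} \<inter> \<Omega>"

definition compactly_contained :: "'a::topological_space set \<Rightarrow> 'a set \<Rightarrow> bool" where
  "compactly_contained A B \<longleftrightarrow> compact (closure A) \<and> closure A \<subseteq> B"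

definition cube :: "real \<Rightarrow> real^'n^'n \<Rightarrow> real^'n \<Rightarrow> (real^'n) set" where
  "cube \<epsilon> R j = (\<lambda>x. j + R *v x) ` ((\<lambda>x. \<epsilon> *\<^sub>R x) ` unit_cube)"

definition cube_corners :: "real \<Rightarrow> real^'n^'n \<Rightarrow> real^'n \<Rightarrow> (real^'n) set \<Rightarrow> (real^'n) set" where
  "cube_corners \<epsilon> R z \<Omega> = {j \<in> lattice_pts \<epsilon> R z \<Omega>. compactly_contained (cube \<epsilon> R j) \<Omega>}"

definition cube_edges_of :: "real \<Rightarrow> real^'n^'n \<Rightarrow> real^'n \<Rightarrow> (real^'n) set set" where
  "cube_edges_of \<epsilon> R j =
     {(\<lambda>x. j + R *v (\<epsilon> *\<^sub>R x)) ` closed_segment v (v + axis k 1) | v k.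
        (\<forall>i. v $ i = 0 \<or> v $ i = 1) \<and> v $ k = 0}"

definition edges :: "real \<Rightarrow> real^'n^'n \<Rightarrow> real^'n \<Rightarrow> (real^'n) set \<Rightarrow> (real^'n) set set" where
  "edges \<epsilon> R z \<Omega> = (\<Union>j \<in> cube_corners \<epsilon> R z \<Omega>. cube_edges_of \<epsilon> R j)"

end

theory Submission
  imports Defs
begin


lemma integer_vecs_countable: "countable (integer_vecs :: (real^'n) set)"
proof -
  have "integer_vecs \<subseteq> range (\<lambda>f::'n \<Rightarrow> int. \<chi> i. real_of_int (f i))"
  proof
    fix k :: "real^'n" assume "k \<in> integer_vecs"
    then have "\<forall>i. \<exists>m::int. k $ i = of_int m" unfolding integer_vecs_def by (auto elim!: Ints_cases)
    then obtain f where "\<forall>i. k $ i = of_int (f i)" by metis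
    then show "k \<in> range (\<lambda>f::'n \<Rightarrow> int. \<chi> i. real_of_int (f i))"
      by (intro image_eqI[of _ _ f]) (auto simp: vec_eq_iff)
  qed
  then show ?thesis by (rule countable_subset) simp
qed

lemma integer_vecs_infinite: "infinite (integer_vecs :: (real^'n) set)"
proof -
  have "range (\<lambda>m::nat. (\<chi> i. real m) :: real^'n) \<subseteq> integer_vecs"
    by (auto simp: integer_vecs_def)
  moreover have "inj (\<lambda>m::nat. (\<chi> i. real m) :: real^'n)"
    by (auto simp: inj_def vec_eq_iff)
  ultimately show ?thesis using infinite_UNIV_nat
    by (metis finite_imageD finite_subset)
qed

lemma integer_vecs_add: "a \<in> integer_vecs \<Longrightarrow> b \<in> integer_vecs \<Longrightarrow> a + b \<in> integer_vecs"
  by (auto simp: integer_vecs_def)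

lemma orth_norm: "orthogonal_matrix (Q::real^'n^'n) \<Longrightarrow> norm (Q *v x) = norm x"
  using orthogonal_transformation_matrix[of "\<lambda>x. Q *v x"] orthogonal_transformation_norm
  by (auto simp: matrix_vector_mul_linear)

lemma On_closed: "closed (On :: (real^'n^'n) set)"
proof -
  have "On = {R::real^'n^'n. transpose R ** R = mat 1}"
    by (auto simp: On_def orthogonal_matrix)
  also have "\<dots> = (\<Inter>i. \<Inter>j. {R::real^'n^'n. (\<Sum>k\<in>UNIV. R$k$i * R$k$j) = (mat 1 :: real^'n^'n)$i$j})"
    by (auto simp: vec_eq_iff matrix_matrix_mult_def transpose_def)
  also have "closed \<dots>"
    by (intro closed_INT ballI closed_Collect_eq continuous_intros)
  finally show ?thesis .
qed


definition edge_at :: "real \<Rightarrow> real^'n^'n \<Rightarrow> real^'n \<Rightarrow> real^'n \<Rightarrow> 'n \<Rightarrow> (real^'n) set" where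
  "edge_at \<epsilon> R z m k = {R *v (\<epsilon> *\<^sub>R (m + z + t *\<^sub>R axis k 1)) | t. 0 \<le> t \<and> t \<le> 1}"

lemma edges_rep:
  assumes "I \<in> edges \<epsilon> R z \<Omega>"
  shows "\<exists>m k. m \<in> integer_vecs \<and> I = edge_at \<epsilon> R z m k"
proof -
  from assms obtain j where j: "j \<in> cube_corners \<epsilon> R z \<Omega>" and I: "I \<in> cube_edges_of \<epsilon> R j"
    unfolding edges_def by blast
  from j obtain k0 where k0: "k0 \<in> integer_vecs" and jdef: "j = R *v (\<epsilon> *\<^sub>R (k0 + z))"
    unfolding cube_corners_def lattice_pts_def by blast
  from I obtain v k where v: "\<forall>i. v $ i = 0 \<or> v $ i = 1" and
    Ieq: "I = (\<lambda>x. j + R *v (\<epsilon> *\<^sub>R x)) ` closed_segment v (v + axis k 1)"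
    unfolding cube_edges_of_def by blast
  have vint: "v \<in> integer_vecs" unfolding integer_vecs_def
  proof
    show "\<forall>i. v $ i \<in> \<int>" using v by (metis Ints_0 Ints_1)
  qed
  have "I = edge_at \<epsilon> R z (k0 + v) k"
  proof -
    have e: "j + R *v (\<epsilon> *\<^sub>R ((1 - t) *\<^sub>R v + t *\<^sub>R (v + axis k 1))) =
          R *v (\<epsilon> *\<^sub>R (k0 + v + z + t *\<^sub>R axis k 1))" for t
    proof -
      have "(1 - t) *\<^sub>R v + t *\<^sub>R (v + axis k 1) = v + t *\<^sub>R axis k 1"
        by (simp add: algebra_simps)
      moreover have "\<epsilon> *\<^sub>R (k0 + v + z + t *\<^sub>R axis k 1) = \<epsilon> *\<^sub>R (k0 + z) + \<epsilon> *\<^sub>R (v + t *\<^sub>R axis k 1)"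
        by (simp add: algebra_simps)
      ultimately show ?thesis unfolding jdef
        by (simp only: matrix_vector_right_distrib)
    qed
    have "I = (\<lambda>t. j + R *v (\<epsilon> *\<^sub>R ((1 - t) *\<^sub>R v + t *\<^sub>R (v + axis k 1)))) ` {0..1}"
      unfolding Ieq closed_segment_def by (auto simp: image_iff) blast
    also have "\<dots> = (\<lambda>t. R *v (\<epsilon> *\<^sub>R (k0 + v + z + t *\<^sub>R axis k 1))) ` {0..1}"
      using e by (intro image_cong) auto
    also have "\<dots> = edge_at \<epsilon> R z (k0 + v) k"
      unfolding edge_at_def by auto
    finally show ?thesis .
  qed
  then show ?thesis using k0 vint integer_vecs_add by blast
qed



definition boxC :: "real \<Rightarrow> real^'n^'n \<Rightarrow> (real^'n) set \<Rightarrow> 'n \<Rightarrow> (real^'n) set" where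
  "boxC \<epsilon> R C k = (if C = {} then {} else
     cbox (\<chi> i. ((1/\<epsilon>) *\<^sub>R (transpose R *v (SOME x. x \<in> C))) $ i - diameter C / \<epsilon> - (if i = k then 1 else 0))
          (\<chi> i. ((1/\<epsilon>) *\<^sub>R (transpose R *v (SOME x. x \<in> C))) $ i + diameter C / \<epsilon>))"

lemma boxC_borel[measurable]: "boxC \<epsilon> R C k \<in> sets borel"
  unfolding boxC_def by auto

lemma aux_div: "(\<epsilon>::real) > 0 \<Longrightarrow> \<bar>\<epsilon> * a - b\<bar> \<le> D \<Longrightarrow> \<bar>a - b / \<epsilon>\<bar> \<le> D / \<epsilon>"
proof -
  assume e: "\<epsilon> > 0" and h: "\<bar>\<epsilon> * a - b\<bar> \<le> D"
  have "a - b / \<epsilon> = (\<epsilon> * a - b) / \<epsilon>" using e by (simp add: field_simps)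
  then show ?thesis using e h by (simp add: abs_divide divide_right_mono)
qed

lemma box_mem:
  assumes R: "orthogonal_matrix R" and e: "\<epsilon> > 0" and C: "bounded C" "x \<in> C"
    and x: "x \<in> edge_at \<epsilon> R z m k"
  shows "m + z \<in> boxC \<epsilon> R C k"
proof -
  obtain t where t: "0 \<le> t" "t \<le> 1" and xe: "x = R *v (\<epsilon> *\<^sub>R (m + z + t *\<^sub>R axis k 1))"
    using x unfolding edge_at_def by blast
  define c where "c = (SOME x. x \<in> C)"
  have c: "c \<in> C" unfolding c_def using C by (metis someI_ex)
  have TR: "transpose R ** R = mat 1" using R by (simp add: orthogonal_matrix)
  have tx: "transpose R *v x = \<epsilon> *\<^sub>R (m + z + t *\<^sub>R axis k 1)"
    unfolding xe matrix_vector_mul_assoc TR by simp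
  have d: "\<bar>(transpose R *v x) $ i - (transpose R *v c) $ i\<bar> \<le> diameter C" for i
  proof -
    have "\<bar>(transpose R *v x) $ i - (transpose R *v c) $ i\<bar> = \<bar>(transpose R *v (x - c)) $ i\<bar>"
      by (simp add: matrix_vector_mult_diff_distrib)
    also have "\<dots> \<le> norm (transpose R *v (x - c))" by (rule component_le_norm_cart)
    also have "\<dots> = norm (x - c)" by (rule orth_norm) (simp add: R)
    also have "\<dots> \<le> diameter C" using diameter_bounded_bound[OF C(1) C(2) c] by (simp add: dist_norm)
    finally show ?thesis .
  qed
  have comp: "(transpose R *v x) $ i = \<epsilon> * ((m + z) $ i + (if i = k then t else 0))" for i
    unfolding tx by (simp add: axis_def)
  have key: "(transpose R *v c) $ i / \<epsilon> - diameter C / \<epsilon> - (if i = k then 1 else 0) \<le> (m + z) $ i \<and>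
         (m + z) $ i \<le> (transpose R *v c) $ i / \<epsilon> + diameter C / \<epsilon>" for i
  proof -
    have di: "\<bar>\<epsilon> * ((m + z) $ i + (if i = k then t else 0)) - (transpose R *v c) $ i\<bar> \<le> diameter C"
      using d[of i] comp[of i] by simp
    have "\<bar>((m + z) $ i + (if i = k then t else 0)) - (transpose R *v c) $ i / \<epsilon>\<bar> \<le> diameter C / \<epsilon>"
      by (rule aux_div[OF e di])
    then show ?thesis using t by (auto split: if_splits)
  qed
  have ne: "C \<noteq> {}" using C(2) by auto
  show ?thesis
    unfolding boxC_def c_def[symmetric] using ne key
    by (simp add: mem_box_cart del: vector_add_component)
qed



lemma hball_const_pos: "s \<ge> 0 \<Longrightarrow> hball_const s > 0"
  unfolding hball_const_def by (intro divide_pos_pos Gamma_real_pos) auto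

lemma prod_if_one:
  fixes a b :: real
  shows "(\<Prod>i\<in>(UNIV::'n::finite set). (if i = k then a else b)) = a * b ^ (CARD('n) - 1)"
proof -
  have "(\<Prod>i\<in>(UNIV::'n set). (if i = k then a else b)) = (if k = k then a else b) * (\<Prod>i\<in>UNIV - {k}. (if i = k then a else b))"
    by (subst prod.remove[of UNIV k]) auto
  also have "(\<Prod>i\<in>UNIV - {k}. (if i = k then a else b)) = (\<Prod>i\<in>UNIV - {k}. b)"
    by (intro prod.cong) auto
  also have "\<dots> = b ^ (CARD('n) - 1)" by (simp add: card_Diff_singleton)
  finally show ?thesis by simp
qed

lemma box_measure_eq:
  fixes k :: "'n::finite"
  assumes e: "\<epsilon> > 0" and C: "C \<noteq> {}" and Cb: "bounded C"
  shows "emeasure lborel (boxC \<epsilon> R C k) =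
     ennreal ((2 * (diameter C / \<epsilon>) + 1) * (2 * (diameter C / \<epsilon>)) ^ (CARD('n) - 1))"
proof -
  define y where "y = (1/\<epsilon>) *\<^sub>R (transpose R *v (SOME x. x \<in> C))"
  define r where "r = diameter C / \<epsilon>"
  have r0: "r \<ge> 0" unfolding r_def using e diameter_ge_0[OF Cb] by simp
  define lo :: "real^'n" where "lo = (\<chi> i. y $ i - r - (if i = k then 1 else 0))"
  define hi :: "real^'n" where "hi = (\<chi> i. y $ i + r)"
  have B: "boxC \<epsilon> R C k = cbox lo hi"
    unfolding boxC_def lo_def hi_def y_def r_def using C by simp
  have ne: "cbox lo hi \<noteq> {}"
    unfolding box_ne_empty(1) using r0 by (auto simp: lo_def hi_def inner_axis cart_eq_inner_axis[symmetric] Basis_vec_def)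
  have "emeasure lborel (cbox lo hi) = ennreal (measure lborel (cbox lo hi))"
    using emeasure_lborel_cbox_finite[of lo hi] by (intro emeasure_eq_ennreal_measure) auto
  also have "measure lborel (cbox lo hi) = (\<Prod>i\<in>UNIV. hi $ i - lo $ i)"
    by (rule content_cbox_cart[OF ne])
  also have "\<dots> = (\<Prod>i\<in>(UNIV::'n set). (if i = k then 2 * r + 1 else 2 * r))"
    by (intro prod.cong) (auto simp: lo_def hi_def)
  also have "\<dots> = (2 * r + 1) * (2 * r) ^ (CARD('n) - 1)" by (rule prod_if_one)
  finally show ?thesis using B r_def by simp
qed

definition Kc :: "nat \<Rightarrow> real" where
  "Kc n = 3 * 4 ^ (n - 1) / hball_const (real (n - 1))"

lemma box_measure_bound:
  fixes k :: "'n::finite"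
  assumes e: "\<epsilon> > 0" and C: "bounded C" and dC: "diameter C \<le> \<epsilon>"
  shows "ennreal (\<epsilon> ^ (CARD('n) - 1)) * emeasure lborel (boxC \<epsilon> R C k)
           \<le> ennreal (Kc CARD('n) * hcost (real (CARD('n) - 1)) C)"
proof (cases "C = {}")
  case True then show ?thesis by (simp add: boxC_def)
next
  case False
  define d where "d = diameter C"
  define N where "N = CARD('n) - 1"
  have d0: "d \<ge> 0" unfolding d_def using diameter_ge_0[OF C] .
  have dle: "d \<le> \<epsilon>" using dC d_def by simp
  have om: "hball_const (real N) > 0" by (rule hball_const_pos) simp
  have r1: "d / \<epsilon> \<le> 1" using dle e by simp
  have "\<epsilon> ^ N * ((2 * (d / \<epsilon>) + 1) * (2 * (d / \<epsilon>)) ^ N) \<le> \<epsilon> ^ N * (3 * (2 * (d / \<epsilon>)) ^ N)"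
  proof -
    have "2 * (d / \<epsilon>) + 1 \<le> 3" using r1 by linarith
    then show ?thesis using e d0 by (intro mult_left_mono mult_right_mono) auto
  qed
  also have "\<dots> = 3 * (2 * d) ^ N"
  proof -
    have "(2 * (d / \<epsilon>)) ^ N = (2 * d) ^ N / \<epsilon> ^ N" by (simp only: times_divide_eq_right power_divide)
    then show ?thesis using e by simp
  qed
  also have "\<dots> \<le> Kc CARD('n) * hcost (real N) C"
  proof (cases "N = 0")
    case True
    then show ?thesis using False by (simp add: Kc_def hcost_def hball_const_def N_def)
  next
    case N: False
    have "hcost (real N) C = hball_const (real N) * (d / 2) ^ N"
      using False N d0 by (simp add: hcost_def d_def powr_realpow' )
    then have "Kc CARD('n) * hcost (real N) C = 3 * 4 ^ N * (d / 2) ^ N"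
      using om by (simp add: Kc_def N_def)
    also have "\<dots> = 3 * (2 * d) ^ N"
    proof -
      have h: "(4::real) * (d / 2) = 2 * d" by simp
      have "(4::real) ^ N * (d / 2) ^ N = (2 * d) ^ N"
        by (simp only: power_mult_distrib[symmetric] h)
      then show ?thesis by (simp only: mult.assoc)
    qed
    finally show ?thesis by simp
  qed
  finally have *: "\<epsilon> ^ N * ((2 * (d / \<epsilon>) + 1) * (2 * (d / \<epsilon>)) ^ N) \<le> Kc CARD('n) * hcost (real N) C" .
  have nn: "0 \<le> (2 * (d / \<epsilon>) + 1) * (2 * (d / \<epsilon>)) ^ N" using e d0 by simp
  show ?thesis
    unfolding box_measure_eq[OF e False C] d_def[symmetric] N_def[symmetric]
    using * e d0 nn by (simp add: ennreal_mult[symmetric] of_nat_diff del: ennreal_mult) (metis ennreal_leI)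
qed



definition zen :: "nat \<Rightarrow> real^'n" where "zen = from_nat_into integer_vecs"

lemma zen_bij: "bij_betw zen UNIV integer_vecs"
  unfolding zen_def by (rule bij_betw_from_nat_into[OF integer_vecs_countable integer_vecs_infinite])

lemma zen_in: "zen j \<in> integer_vecs"
  using zen_bij by (auto simp: bij_betw_def)

lemma zen_inj: "zen i = zen j \<Longrightarrow> i = j"
  using zen_bij by (auto simp: bij_betw_def inj_def)

definition cnt :: "(real^'n) set \<Rightarrow> real^'n \<Rightarrow> ennreal" where
  "cnt B z = (\<Sum>j. indicator B (zen j + z))"

lemma transl_meas[measurable]:
  fixes c :: "'a::euclidean_space"
  shows "B \<in> sets borel \<Longrightarrow> (\<lambda>z. indicator B (c + z) :: ennreal) \<in> borel_measurable borel"
proof -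
  assume B: "B \<in> sets borel"
  have "(\<lambda>z::'a. c + z) \<in> borel_measurable borel"
    by (intro borel_measurable_continuous_onI continuous_intros)
  from measurable_compose[OF this borel_measurable_indicator[OF B]] show ?thesis by (simp add: o_def)
qed

lemma cnt_meas[measurable]: "B \<in> sets borel \<Longrightarrow> cnt B \<in> borel_measurable borel"
  unfolding cnt_def by (intro borel_measurable_suminf_order transl_meas)

lemma unit_cube_borel[measurable]: "(unit_cube :: (real^'n) set) \<in> sets borel"
proof -
  have "(unit_cube :: (real^'n) set) = box 0 1"
    by (auto simp: unit_cube_def mem_box_cart)
  then show ?thesis by (metis borel_open open_box)
qed

lemma cube_translates_disjoint:
  "disjoint_family (\<lambda>j. {w::real^'n. w - zen j \<in> unit_cube})"
proof (unfold disjoint_family_on_def, intro ballI impI)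
  fix i j :: nat assume "i \<noteq> j"
  then have ne: "zen i \<noteq> (zen j :: real^'n)" using zen_inj by blast
  then obtain c where c: "zen i $ c \<noteq> (zen j :: real^'n) $ c" by (auto simp: vec_eq_iff)
  show "{w::real^'n. w - zen i \<in> unit_cube} \<inter> {w. w - zen j \<in> unit_cube} = {}"
  proof (rule ccontr)
    assume "\<not> ?thesis"
    then obtain w :: "real^'n" where w: "w - zen i \<in> unit_cube" "w - zen j \<in> unit_cube" by blast
    then have "0 < w $ c - zen i $ c" "w $ c - zen i $ c < 1" "0 < w $ c - zen j $ c" "w $ c - zen j $ c < 1"
      unfolding unit_cube_def by auto
    then have "\<bar>zen i $ c - zen j $ c\<bar> < 1" by (simp add: abs_less_iff)
    moreover have "zen i $ c - zen j $ c \<in> \<int>" using zen_in[of i] zen_in[of j]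
      unfolding integer_vecs_def by (auto intro: Ints_diff)
    ultimately have "zen i $ c - zen j $ c = 0" by (intro Ints_nonzero_abs_less1)
    with c show False by simp
  qed
qed

lemma translate_integral:
  fixes g :: "real^'n \<Rightarrow> ennreal"
  assumes [measurable]: "g \<in> borel_measurable borel"
  shows "(\<integral>\<^sup>+ z. g (c + z) \<partial>lborel) = (\<integral>\<^sup>+ w. g w \<partial>lborel)"
proof -
  have "(\<integral>\<^sup>+ w. g w \<partial>lborel) = (\<integral>\<^sup>+ w. g w \<partial>distr lborel borel ((+) c))"
    by (simp add: lborel_distr_plus)
  also have "\<dots> = (\<integral>\<^sup>+ z. g (c + z) \<partial>lborel)"
    by (rule nn_integral_distr) auto
  finally show ?thesis ..
qed

lemma tiling:
  assumes B[measurable]: "B \<in> sets borel"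
  shows "(\<integral>\<^sup>+ z. cnt B z * indicator unit_cube z \<partial>lborel) \<le> emeasure lborel (B :: (real^'n) set)"
proof -
  have "(\<integral>\<^sup>+ z. cnt B z * indicator unit_cube z \<partial>lborel) =
        (\<integral>\<^sup>+ z. (\<Sum>j. indicator B (zen j + z) * indicator unit_cube z) \<partial>lborel)"
    unfolding cnt_def by (simp add: mult.commute[of _ "indicator unit_cube _"])
  also have "\<dots> = (\<Sum>j. \<integral>\<^sup>+ z. indicator B (zen j + z) * indicator unit_cube z \<partial>lborel)"
    by (rule nn_integral_suminf) measurable
  also have "\<dots> = (\<Sum>j. \<integral>\<^sup>+ w. indicator B w * indicator {w. w - zen j \<in> unit_cube} w \<partial>lborel)"
  proof (rule suminf_cong)
    fix j
    show "(\<integral>\<^sup>+ z. indicator B (zen j + z) * indicator unit_cube z \<partial>lborel) =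
          (\<integral>\<^sup>+ w. indicator B w * indicator {w. w - zen j \<in> unit_cube} w \<partial>lborel)"
      using translate_integral[of "\<lambda>w. indicator B w * indicator {w. w - zen j \<in> unit_cube} w" "zen j"]
      by (simp add: indicator_def)
  qed
  also have "\<dots> = (\<integral>\<^sup>+ w. (\<Sum>j. indicator B w * indicator {w. w - zen j \<in> unit_cube} w) \<partial>lborel)"
    by (rule nn_integral_suminf[symmetric]) measurable
  also have "\<dots> = (\<integral>\<^sup>+ w. indicator B w * indicator (\<Union>j. {w. w - zen j \<in> unit_cube}) w \<partial>lborel)"
    by (simp add: suminf_indicator[OF cube_translates_disjoint])
  also have "\<dots> \<le> (\<integral>\<^sup>+ w. indicator B w \<partial>lborel)"
    by (intro nn_integral_mono) (auto simp: indicator_def)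
  also have "\<dots> = emeasure lborel B" by simp
  finally show ?thesis .
qed



definition hsum :: "real \<Rightarrow> real^'n^'n \<Rightarrow> (nat \<Rightarrow> (real^'n) set) \<Rightarrow> real^'n \<Rightarrow> ennreal" where
  "hsum \<epsilon> R Cs z = (\<Sum>i. \<Sum>k\<in>UNIV. cnt (boxC \<epsilon> R (Cs i) k) z)"

lemma hsum_meas[measurable]: "hsum \<epsilon> R Cs \<in> borel_measurable borel"
  unfolding hsum_def by (intro borel_measurable_suminf_order borel_measurable_sum cnt_meas boxC_borel)

lemma hcost_nonneg: "s \<ge> 0 \<Longrightarrow> hcost s C \<ge> 0"
  unfolding hcost_def using hball_const_pos[of s] by auto

lemma hsum_int:
  fixes R :: "real^'n^'n" and Cs :: "nat \<Rightarrow> (real^'n) set"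
  assumes e: "\<epsilon> > 0" and Cs: "\<And>i. bounded (Cs i)" "\<And>i. diameter (Cs i) \<le> \<epsilon>"
  shows "ennreal (\<epsilon> ^ (CARD('n) - 1)) * (\<integral>\<^sup>+ z. hsum \<epsilon> R Cs z * indicator unit_cube z \<partial>lborel)
     \<le> ennreal (real CARD('n) * Kc CARD('n)) * (\<Sum>i. ennreal (hcost (real (CARD('n) - 1)) (Cs i)))"
proof -
  let ?E = "ennreal (\<epsilon> ^ (CARD('n) - 1))"
  let ?h = "\<lambda>C. hcost (real (CARD('n) - 1)) C"
  have "(\<integral>\<^sup>+ z. hsum \<epsilon> R Cs z * indicator unit_cube z \<partial>lborel) =
        (\<integral>\<^sup>+ z. (\<Sum>i. \<Sum>k\<in>UNIV. cnt (boxC \<epsilon> R (Cs i) k) z * indicator unit_cube z) \<partial>lborel)"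
  proof (rule nn_integral_cong)
    fix z :: "real^'n"
    have "hsum \<epsilon> R Cs z * indicator unit_cube z = indicator unit_cube z * hsum \<epsilon> R Cs z"
      by (rule mult.commute)
    also have "\<dots> = (\<Sum>i. indicator unit_cube z * (\<Sum>k\<in>UNIV. cnt (boxC \<epsilon> R (Cs i) k) z))"
      unfolding hsum_def by (rule ennreal_suminf_cmult[symmetric])
    also have "\<dots> = (\<Sum>i. \<Sum>k\<in>UNIV. cnt (boxC \<epsilon> R (Cs i) k) z * indicator unit_cube z)"
      by (simp add: sum_distrib_left mult.commute)
    finally show "hsum \<epsilon> R Cs z * indicator unit_cube z = (\<Sum>i. \<Sum>k\<in>UNIV. cnt (boxC \<epsilon> R (Cs i) k) z * indicator unit_cube z)" .
  qed
  also have "\<dots> = (\<Sum>i. \<integral>\<^sup>+ z. (\<Sum>k\<in>UNIV. cnt (boxC \<epsilon> R (Cs i) k) z * indicator unit_cube z) \<partial>lborel)"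
    by (rule nn_integral_suminf) measurable
  also have "\<dots> = (\<Sum>i. \<Sum>k\<in>UNIV. \<integral>\<^sup>+ z. cnt (boxC \<epsilon> R (Cs i) k) z * indicator unit_cube z \<partial>lborel)"
    by (intro suminf_cong nn_integral_sum) measurable
  also have "\<dots> \<le> (\<Sum>i. \<Sum>k\<in>UNIV. emeasure lborel (boxC \<epsilon> R (Cs i) (k::'n)))"
    by (intro suminf_le sum_mono tiling boxC_borel) auto
  finally have I: "(\<integral>\<^sup>+ z. hsum \<epsilon> R Cs z * indicator unit_cube z \<partial>lborel) \<le>
                (\<Sum>i. \<Sum>k\<in>UNIV. emeasure lborel (boxC \<epsilon> R (Cs i) (k::'n)))" .
  have "?E * (\<integral>\<^sup>+ z. hsum \<epsilon> R Cs z * indicator unit_cube z \<partial>lborel) \<le>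
        ?E * (\<Sum>i. \<Sum>k\<in>UNIV. emeasure lborel (boxC \<epsilon> R (Cs i) (k::'n)))"
    by (rule mult_left_mono[OF I]) simp
  also have "\<dots> = (\<Sum>i. \<Sum>k\<in>UNIV. ?E * emeasure lborel (boxC \<epsilon> R (Cs i) (k::'n)))"
    by (subst ennreal_suminf_cmult[symmetric]) (simp add: sum_distrib_left)
  also have "\<dots> \<le> (\<Sum>i. \<Sum>k\<in>(UNIV::'n set). ennreal (Kc CARD('n) * ?h (Cs i)))"
    by (intro suminf_le sum_mono box_measure_bound e Cs) auto
  also have "\<dots> = (\<Sum>i. ennreal (real CARD('n) * Kc CARD('n)) * ennreal (?h (Cs i)))"
  proof (rule suminf_cong)
    fix i
    have K0: "Kc CARD('n) \<ge> 0" unfolding Kc_def using hball_const_pos[of "real (CARD('n) - 1)"] by simp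
    have h0: "?h (Cs i) \<ge> 0" by (rule hcost_nonneg) simp
    show "(\<Sum>k\<in>(UNIV::'n set). ennreal (Kc CARD('n) * ?h (Cs i))) =
          ennreal (real CARD('n) * Kc CARD('n)) * ennreal (?h (Cs i))"
      using K0 h0 by (simp add: ennreal_mult[symmetric] ennreal_of_nat_eq_real_of_nat mult.assoc del: ennreal_mult)
  qed
  also have "\<dots> = ennreal (real CARD('n) * Kc CARD('n)) * (\<Sum>i. ennreal (?h (Cs i)))"
    by simp
  finally show ?thesis .
qed



lemma count_le:
  fixes a :: "nat \<Rightarrow> 'k::finite \<Rightarrow> nat \<Rightarrow> ennreal"
  assumes G: "finite G" and ge: "\<And>i k j. (i, k, j) \<in> G \<Longrightarrow> a i k j \<ge> 1"
  shows "of_nat (card G) \<le> (\<Sum>i. \<Sum>k\<in>UNIV. \<Sum>j. a i k j)"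
proof -
  obtain N where N: "\<And>i k j. (i, k, j) \<in> G \<Longrightarrow> i < N \<and> j < N"
  proof -
    define N where "N = Suc (Max ((\<lambda>(i,k,j). max i j) ` G))"
    have "i < N \<and> j < N" if "(i, k, j) \<in> G" for i k j
    proof -
      have "max i j \<le> Max ((\<lambda>(i,k,j). max i j) ` G)"
        using G that by (intro Max_ge) force+
      then show ?thesis unfolding N_def by simp
    qed
    then show ?thesis using that by blast
  qed
  let ?A = "{..<N} \<times> (UNIV :: 'k set) \<times> {..<N}"
  have sub: "G \<subseteq> ?A" using N by auto
  have "of_nat (card G) = (\<Sum>g\<in>G. (1::ennreal))" by simp
  also have "\<dots> \<le> (\<Sum>g\<in>G. case g of (i, k, j) \<Rightarrow> a i k j)"
    by (intro sum_mono) (auto simp: ge)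
  also have "\<dots> \<le> (\<Sum>g\<in>?A. case g of (i, k, j) \<Rightarrow> a i k j)"
    by (intro sum_mono2 sub) auto
  also have "\<dots> = (\<Sum>i<N. \<Sum>k\<in>UNIV. \<Sum>j<N. a i k j)"
    by (simp add: sum.cartesian_product)
  also have "\<dots> \<le> (\<Sum>i<N. \<Sum>k\<in>UNIV. \<Sum>j. a i k j)"
    by (intro sum_mono sum_le_suminf) auto
  also have "\<dots> \<le> (\<Sum>i. \<Sum>k\<in>UNIV. \<Sum>j. a i k j)"
    by (intro sum_le_suminf) auto
  finally show ?thesis .
qed



lemma edges_rep_zen:
  assumes "I \<in> edges \<epsilon> R z \<Omega>"
  shows "\<exists>j k. I = edge_at \<epsilon> R z (zen j) k"
proof -
  obtain m k where m: "m \<in> integer_vecs" and I: "I = edge_at \<epsilon> R z m k"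
    using edges_rep[OF assms] by blast
  from m zen_bij obtain j where "m = zen j" by (auto simp: bij_betw_def)
  then show ?thesis using I by blast
qed

lemma sep_const:
  fixes X :: "'a::metric_space set"
  assumes "finite X"
  shows "\<exists>d>0. \<forall>x\<in>X. \<forall>y\<in>X. x \<noteq> y \<longrightarrow> d \<le> dist x y"
proof -
  define D where "D = (\<lambda>(x,y). dist x y) ` {(x,y). x \<in> X \<and> y \<in> X \<and> x \<noteq> y}"
  have fD: "finite D" unfolding D_def
    by (rule finite_imageI, rule finite_subset[of _ "X \<times> X"]) (use assms in auto)
  define d where "d = Min (insert 1 D)"
  have "d > 0" unfolding d_def using fD by (subst Min_gr_iff) (auto simp: D_def)
  moreover have "d \<le> dist x y" if "x \<in> X" "y \<in> X" "x \<noteq> y" for x y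
    unfolding d_def using fD that by (intro Min_le) (auto simp: D_def)
  ultimately show ?thesis by blast
qed

lemma stepA:
  fixes R :: "real^'n^'n" and M \<Omega> :: "(real^'n) set" and z :: "real^'n"
  assumes R: "orthogonal_matrix R" and e: "\<epsilon> > 0" and F: "finite F"
    and FP: "F \<subseteq> {(I, x). I \<in> edges \<epsilon> R z \<Omega> \<and> x \<in> I \<and> x \<in> M}"
  shows "\<exists>d0>0. \<forall>Cs \<delta>. M \<subseteq> (\<Union>i. Cs i) \<longrightarrow> (\<forall>i. bounded (Cs i) \<and> diameter (Cs i) \<le> \<delta>) \<longrightarrow> \<delta> < d0
           \<longrightarrow> of_nat (card F) \<le> hsum \<epsilon> R Cs z"
proof -
  obtain d0 where d0: "d0 > 0" and sep: "\<And>x y. x \<in> snd ` F \<Longrightarrow> y \<in> snd ` F \<Longrightarrow> x \<noteq> y \<Longrightarrow> d0 \<le> dist x y"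
    using sep_const[of "snd ` F"] F by blast
  have "of_nat (card F) \<le> hsum \<epsilon> R Cs z"
    if cov: "M \<subseteq> (\<Union>i. Cs i)" and Cs: "\<forall>i. bounded (Cs i) \<and> diameter (Cs i) \<le> \<delta>" and dl: "\<delta> < d0"
    for Cs \<delta>
  proof -
    define ix where "ix x = (SOME i. x \<in> Cs i)" for x
    define jk where "jk I = (SOME p. I = edge_at \<epsilon> R z (zen (fst p)) (snd p))" for I
    define f where "f = (\<lambda>(I, x). (ix x, snd (jk I), fst (jk I)))"
    have ixP: "x \<in> Cs (ix x)" if "x \<in> M" for x
      unfolding ix_def using cov that by (metis UN_E someI_ex subsetD)
    have jkP: "I = edge_at \<epsilon> R z (zen (fst (jk I))) (snd (jk I))" if Iin: "I \<in> edges \<epsilon> R z \<Omega>" for I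
    proof -
      obtain j k where "I = edge_at \<epsilon> R z (zen j) k" using edges_rep_zen[OF Iin] by blast
      then have "\<exists>p. I = edge_at \<epsilon> R z (zen (fst p)) (snd p)" by (metis fst_conv snd_conv)
      then show ?thesis unfolding jk_def by (rule someI_ex)
    qed
    have inj: "inj_on f F"
    proof (rule inj_onI)
      fix a b assume a: "a \<in> F" and b: "b \<in> F" and fab: "f a = f b"
      obtain I x where ax: "a = (I, x)" by (cases a)
      obtain I' x' where bx: "b = (I', x')" by (cases b)
      have aP: "I \<in> edges \<epsilon> R z \<Omega>" "x \<in> I" "x \<in> M" using FP a ax by auto
      have bP: "I' \<in> edges \<epsilon> R z \<Omega>" "x' \<in> I'" "x' \<in> M" using FP b bx by auto
      have eq: "ix x = ix x'" "jk I = jk I'" using fab ax bx by (auto simp: f_def prod_eq_iff)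
      have II: "I = I'" using jkP[OF aP(1)] jkP[OF bP(1)] eq(2) by simp
      have xx: "x = x'"
      proof (rule ccontr)
        assume ne: "x \<noteq> x'"
        have "x \<in> Cs (ix x)" "x' \<in> Cs (ix x)" using ixP[OF aP(3)] ixP[OF bP(3)] eq(1) by auto
        then have "dist x x' \<le> diameter (Cs (ix x))" using Cs by (intro diameter_bounded_bound) auto
        also have "\<dots> \<le> \<delta>" using Cs by auto
        finally have "dist x x' < d0" using dl by simp
        moreover have "d0 \<le> dist x x'" using sep[of x x'] a b ax bx ne by force
        ultimately show False by simp
      qed
      show "a = b" using ax bx II xx by simp
    qed
    have "(of_nat (card F) :: ennreal) = of_nat (card (f ` F))" using card_image[OF inj] by simp
    also have "\<dots> \<le> (\<Sum>i. \<Sum>k\<in>UNIV. \<Sum>j. indicator (boxC \<epsilon> R (Cs i) k) (zen j + z))"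
    proof (rule count_le[where a="\<lambda>i k j. indicator (boxC \<epsilon> R (Cs i) k) (zen j + z)"])
      show "finite (f ` F)" using F by simp
      fix i k j assume "(i, k, j) \<in> f ` F"
      then obtain I x where Ix: "(I, x) \<in> F" and fe: "(i, k, j) = f (I, x)" by auto
      have P: "I \<in> edges \<epsilon> R z \<Omega>" "x \<in> I" "x \<in> M" using FP Ix by auto
      have "x \<in> Cs i" using ixP[OF P(3)] fe by (simp add: f_def)
      moreover have "x \<in> edge_at \<epsilon> R z (zen j) k" using jkP[OF P(1)] P(2) fe by (simp add: f_def)
      ultimately have "zen j + z \<in> boxC \<epsilon> R (Cs i) k"
        using Cs by (intro box_mem[OF R e]) auto
      then show "(1::ennreal) \<le> indicator (boxC \<epsilon> R (Cs i) k) (zen j + z)" by simp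
    qed
    also have "\<dots> = hsum \<epsilon> R Cs z" unfolding hsum_def cnt_def ..
    finally show ?thesis .
  qed
  then show ?thesis using d0 by blast
qed



lemma countable_edges: "countable (edges \<epsilon> R z \<Omega> :: (real^'n) set set)"
proof -
  have "edges \<epsilon> R z \<Omega> \<subseteq> (\<lambda>(j, k). edge_at \<epsilon> R z (zen j) (k::'n)) ` UNIV"
    using edges_rep_zen by fastforce
  then show ?thesis by (rule countable_subset) simp
qed

lemma count_int_bound:
  fixes g :: "'a \<Rightarrow> ennreal"
  assumes A: "countable A" and le: "\<And>F. finite F \<Longrightarrow> F \<subseteq> A \<Longrightarrow> sum g F \<le> X"
  shows "(\<integral>\<^sup>+ x. g x \<partial>count_space A) \<le> X"
proof (cases "finite A")
  case True
  then show ?thesis using le[of A] by (simp add: nn_integral_count_space_finite)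
next
  case False
  define e where "e = from_nat_into A"
  have bij: "bij_betw e UNIV A" unfolding e_def by (rule bij_betw_from_nat_into[OF A False])
  have "(\<integral>\<^sup>+ x. g x \<partial>count_space A) = (\<integral>\<^sup>+ j. g (e j) \<partial>count_space UNIV)"
    by (rule nn_integral_bij_count_space[OF bij, symmetric])
  also have "\<dots> = (\<Sum>j. g (e j))" by (rule nn_integral_count_space_nat)
  also have "\<dots> \<le> X"
    unfolding suminf_eq_SUP
  proof (rule SUP_least)
    fix n
    have inj: "inj_on e {..<n}" using bij by (auto simp: bij_betw_def inj_on_def)
    have "(\<Sum>j<n. g (e j)) = sum g (e ` {..<n})" by (simp add: sum.reindex[OF inj])
    also have "\<dots> \<le> X" using bij by (intro le) (auto simp: bij_betw_def)
    finally show "(\<Sum>j<n. g (e j)) \<le> X" .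
  qed
  finally show ?thesis .
qed

lemma pointwise:
  fixes R :: "real^'n^'n" and M \<Omega> :: "(real^'n) set" and z :: "real^'n"
    and Cs :: "nat \<Rightarrow> nat \<Rightarrow> (real^'n) set" and \<delta> :: "nat \<Rightarrow> real"
  assumes R: "orthogonal_matrix R" and e: "\<epsilon> > 0"
    and cov: "\<And>k. M \<subseteq> (\<Union>i. Cs k i)" and Cs: "\<And>k i. bounded (Cs k i) \<and> diameter (Cs k i) \<le> \<delta> k"
    and dl: "\<delta> \<longlonglongrightarrow> 0"
  shows "(\<integral>\<^sup>+ I. ennreal (\<epsilon> ^ (CARD('n) - 1)) * emeasure (count_space UNIV) (I \<inter> M) \<partial>count_space (edges \<epsilon> R z \<Omega>))
     \<le> liminf (\<lambda>k. ennreal (\<epsilon> ^ (CARD('n) - 1)) * hsum \<epsilon> R (Cs k) z)"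
    (is "_ \<le> ?X")
proof -
  define c where "c = \<epsilon> ^ (CARD('n) - 1)"
  have c0: "c > 0" unfolding c_def using e by simp
  let ?P = "{(I, x). I \<in> edges \<epsilon> R z \<Omega> \<and> x \<in> I \<and> x \<in> M}"
  have star: "ennreal c * of_nat (card F) \<le> ?X" if F: "finite F" "F \<subseteq> ?P" for F
  proof -
    obtain d0 where d0: "d0 > 0" and H: "\<And>Cs \<delta>. M \<subseteq> (\<Union>i. Cs i) \<Longrightarrow> (\<forall>i. bounded (Cs i) \<and> diameter (Cs i) \<le> \<delta>)
         \<Longrightarrow> \<delta> < d0 \<Longrightarrow> of_nat (card F) \<le> hsum \<epsilon> R Cs z"
      using stepA[OF R e F] by blast
    have "eventually (\<lambda>k. \<delta> k < d0) sequentially"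
      using dl d0 by (simp add: order_tendsto_iff)
    then have "eventually (\<lambda>k. ennreal c * of_nat (card F) \<le> ennreal c * hsum \<epsilon> R (Cs k) z) sequentially"
    proof (rule eventually_mono)
      fix k assume "\<delta> k < d0"
      then have "of_nat (card F) \<le> hsum \<epsilon> R (Cs k) z" using H[OF cov] Cs by blast
      then show "ennreal c * of_nat (card F) \<le> ennreal c * hsum \<epsilon> R (Cs k) z" by (rule mult_left_mono) simp
    qed
    then show ?thesis unfolding c_def by (rule Liminf_bounded)
  qed
  show ?thesis
  proof (rule count_int_bound[OF countable_edges])
    fix B assume B: "finite B" "B \<subseteq> edges \<epsilon> R z \<Omega>"
    show "(\<Sum>I\<in>B. ennreal (\<epsilon> ^ (CARD('n) - 1)) * emeasure (count_space UNIV) (I \<inter> M)) \<le> ?X"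
    proof (cases "\<forall>I\<in>B. finite (I \<inter> M)")
      case True
      have "(\<Sum>I\<in>B. ennreal (\<epsilon> ^ (CARD('n) - 1)) * emeasure (count_space UNIV) (I \<inter> M)) =
            ennreal c * of_nat (card (SIGMA I:B. I \<inter> M))"
        using True B(1) by (simp add: c_def sum_distrib_left[symmetric])
      also have "\<dots> \<le> ?X" using True B by (intro star) auto
      finally show ?thesis .
    next
      case False
      then obtain I0 where I0: "I0 \<in> B" "infinite (I0 \<inter> M)" by blast
      have "?X = top"
      proof (rule ccontr)
        assume "?X \<noteq> top"
        then obtain x where x: "?X = ennreal x" "x \<ge> 0" by (cases ?X) auto
        obtain N :: nat where N: "x / c < N" using reals_Archimedean2 by blast
        obtain S where S: "S \<subseteq> I0 \<inter> M" "finite S" "card S = N"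
          using infinite_arbitrarily_large[OF I0(2)] by blast
        have "ennreal c * of_nat (card ({I0} \<times> S)) \<le> ?X"
          using S I0 B by (intro star) auto
        then have "ennreal (c * N) \<le> ennreal x" using S c0 x
          by (simp add: card_cartesian_product ennreal_mult ennreal_of_nat_eq_real_of_nat)
        then have "c * N \<le> x" using x by (simp add: ennreal_le_iff)
        with N c0 show False by (simp add: field_simps)
      qed
      then show ?thesis by simp
    qed
  qed
qed



lemma sets_hausdorff: "sets (hausdorff_measure s :: 'a::metric_space measure) = sets borel"
proof -
  have "sets (hausdorff_measure s :: 'a measure) = sigma_sets UNIV (sets borel)"
    unfolding hausdorff_measure_def by (rule sets_measure_of) simp
  also have "\<dots> = sets borel"
    using sets.sigma_sets_eq[of borel] by simp
  finally show ?thesis .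
qed

lemma avg_bound:
  fixes f :: "'a \<Rightarrow> ennreal"
  assumes A: "A \<in> sets \<mu>" and le: "\<And>x. x \<in> A \<Longrightarrow> f x \<le> B"
  shows "(\<integral>\<^sup>+ x \<in> A. f x \<partial>\<mu>) / emeasure \<mu> A \<le> B"
proof -
  have I: "(\<integral>\<^sup>+ x \<in> A. f x \<partial>\<mu>) \<le> B * emeasure \<mu> A"
  proof -
    have "(\<integral>\<^sup>+ x \<in> A. f x \<partial>\<mu>) \<le> (\<integral>\<^sup>+ x. B * indicator A x \<partial>\<mu>)"
      by (intro nn_integral_mono) (auto simp: indicator_def le)
    also have "\<dots> = B * emeasure \<mu> A" by (rule nn_integral_cmult_indicator[OF A])
    finally show ?thesis .
  qed
  show ?thesis
  proof (cases "emeasure \<mu> A = 0")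
    case True
    then show ?thesis using I by simp
  next
    case F: False
    show ?thesis
    proof (cases "emeasure \<mu> A = top")
      case True then show ?thesis by simp
    next
      case False
      have "(\<integral>\<^sup>+ x \<in> A. f x \<partial>\<mu>) / emeasure \<mu> A \<le> (B * emeasure \<mu> A) / emeasure \<mu> A"
        by (rule divide_right_mono_ennreal[OF I])
      also have "\<dots> = B" using F False by (rule ennreal_mult_divide_eq)
      finally show ?thesis .
    qed
  qed
qed

lemma perR:
  fixes R :: "real^'n^'n" and M \<Omega> :: "(real^'n) set"
  assumes R: "orthogonal_matrix R" and e: "\<epsilon> > 0"
  shows "(\<integral>\<^sup>+ z \<in> unit_cube. (\<integral>\<^sup>+ I. ennreal (\<epsilon> ^ (CARD('n) - 1)) * emeasure (count_space UNIV) (I \<inter> M)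
               \<partial>count_space (edges \<epsilon> R z \<Omega>)) \<partial>lborel)
         \<le> ennreal (real CARD('n) * Kc CARD('n)) * hausdorff_outer (real (CARD('n) - 1)) M"
    (is "?L \<le> ?K * ?Hm")
proof -
  define s where "s = real (CARD('n) - 1)"
  define c where "c = ennreal (\<epsilon> ^ (CARD('n) - 1))"
  define Kr where "Kr = real CARD('n) * Kc CARD('n)"
  have Kr0: "Kr > 0" unfolding Kr_def Kc_def using hball_const_pos[of "real (CARD('n) - 1)"] by simp
  show ?thesis
  proof (cases "?Hm = top")
    case True
    then show ?thesis using Kr0 by (simp add: Kr_def[symmetric] ennreal_mult_top)
  next
    case Hfin: False
    define \<delta> where "\<delta> k = \<epsilon> * inverse (real (Suc k))" for k
    have \<delta>0: "\<delta> k > 0" for k unfolding \<delta>_def using e by simp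
    have \<delta>lim: "\<delta> \<longlonglongrightarrow> 0" unfolding \<delta>_def
      using tendsto_mult_right_zero[OF LIMSEQ_inverse_real_of_nat, of \<epsilon>] by simp
    have "\<exists>C. M \<subseteq> (\<Union>i. C i) \<and> (\<forall>i. bounded (C i) \<and> diameter (C i) \<le> \<delta> k) \<and>
            (\<Sum>i. ennreal (hcost s (C i))) < ?Hm + ennreal (inverse (real (Suc k)))" for k
    proof -
      let ?S = "{C :: nat \<Rightarrow> (real^'n) set. M \<subseteq> (\<Union>i. C i) \<and> (\<forall>i. bounded (C i) \<and> diameter (C i) \<le> \<delta> k)}"
      have "(INF C \<in> ?S. (\<Sum>i. ennreal (hcost s (C i)))) \<le> ?Hm"
        unfolding hausdorff_outer_def s_def using \<delta>0[of k]
        by (intro SUP_upper2[of "\<delta> k"]) auto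
      also have "\<dots> < ?Hm + ennreal (inverse (real (Suc k)))"
      proof -
        have "?Hm + 0 < ?Hm + ennreal (inverse (real (Suc k)))"
          using Hfin by (subst ennreal_add_left_cancel_less) simp
        then show ?thesis by simp
      qed
      finally show ?thesis by (subst (asm) INF_less_iff) auto
    qed
    then obtain Cs where Cs: "\<And>k. M \<subseteq> (\<Union>i. Cs k i)" "\<And>k i. bounded (Cs k i) \<and> diameter (Cs k i) \<le> \<delta> k"
      "\<And>k. (\<Sum>i. ennreal (hcost s (Cs k i))) < ?Hm + ennreal (inverse (real (Suc k)))"
      by metis
    have \<delta>le: "\<delta> k \<le> \<epsilon>" for k unfolding \<delta>_def using e
      by (simp add: mult_le_cancel_left1 field_simps)
    let ?u = "\<lambda>k z. c * hsum \<epsilon> R (Cs k) z * indicator unit_cube z"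
    have "?L \<le> (\<integral>\<^sup>+ z. liminf (\<lambda>k. ?u k z) \<partial>lborel)"
    proof (intro nn_integral_mono)
      fix z :: "real^'n"
      show "(\<integral>\<^sup>+ I. ennreal (\<epsilon> ^ (CARD('n) - 1)) * emeasure (count_space UNIV) (I \<inter> M)
               \<partial>count_space (edges \<epsilon> R z \<Omega>)) * indicator unit_cube z \<le> liminf (\<lambda>k. ?u k z)"
      proof (cases "z \<in> unit_cube")
        case True
        then show ?thesis
          using pointwise[OF R e Cs(1) Cs(2) \<delta>lim, of z \<Omega>] by (simp add: c_def)
      qed simp
    qed
    also have "\<dots> \<le> liminf (\<lambda>k. \<integral>\<^sup>+ z. ?u k z \<partial>lborel)"
      by (rule nn_integral_liminf) measurable
    also have "\<dots> \<le> ?K * ?Hm"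
    proof (rule ennreal_le_epsilon)
      fix r :: real assume "?K * ?Hm < top" and r: "0 < r"
      obtain N :: nat where N: "Kr / r < N" using reals_Archimedean2 by blast
      have ev: "\<forall>\<^sub>F k in sequentially. (\<integral>\<^sup>+ z. ?u k z \<partial>lborel) \<le> ?K * ?Hm + ennreal r"
        unfolding eventually_sequentially
      proof (intro exI allI impI)
        fix k assume kN: "N \<le> k"
        have "(\<integral>\<^sup>+ z. ?u k z \<partial>lborel) = c * (\<integral>\<^sup>+ z. hsum \<epsilon> R (Cs k) z * indicator unit_cube z \<partial>lborel)"
          by (subst nn_integral_cmult[symmetric]) (measurable, simp add: mult.assoc)
        also have "\<dots> \<le> ?K * (\<Sum>i. ennreal (hcost s (Cs k i)))"
          unfolding c_def s_def by (rule hsum_int[OF e]) (use Cs(2) \<delta>le in \<open>auto intro: order.trans\<close>)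
        also have "\<dots> \<le> ?K * (?Hm + ennreal (inverse (real (Suc k))))"
          using Cs(3)[of k] by (intro mult_left_mono) auto
        also have "\<dots> = ?K * ?Hm + ennreal (Kr * inverse (real (Suc k)))"
          using Kr0 by (simp add: distrib_left Kr_def ennreal_mult)
        also have "\<dots> \<le> ?K * ?Hm + ennreal r"
        proof -
          have "Kr / r < real (Suc k)" using N kN of_nat_mono[OF kN] by linarith
          then have "Kr < r * real (Suc k)" using r by (simp add: pos_divide_less_eq mult.commute)
          then have "Kr * inverse (real (Suc k)) \<le> r" by (simp add: field_simps)
          then show ?thesis by (intro add_left_mono ennreal_leI)
        qed
        finally show "(\<integral>\<^sup>+ z. ?u k z \<partial>lborel) \<le> ?K * ?Hm + ennreal r" .
      qed
      show "liminf (\<lambda>k. \<integral>\<^sup>+ z. ?u k z \<partial>lborel) \<le> ?K * ?Hm + ennreal r"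
        by (rule Liminf_le[OF _ ev]) simp
    qed
    finally show ?thesis .
  qed
qed

theorem lemma4p5:
  "\<exists>c::real. c > 0 \<and>
     (\<forall>(\<Omega> :: (real^'n) set) (M :: (real^'n) set) (\<epsilon>::real).
        open \<Omega> \<longrightarrow> M \<subseteq> \<Omega> \<longrightarrow> rectifiable (CARD('n) - 1) M \<longrightarrow>
        hausdorff_outer (real (CARD('n) - 1)) M < \<infinity> \<longrightarrow> \<epsilon> > 0 \<longrightarrow>
        (\<integral>\<^sup>+ R \<in> On. (\<integral>\<^sup>+ z \<in> unit_cube.
            (\<integral>\<^sup>+ I. ennreal (\<epsilon> ^ (CARD('n) - 1)) * emeasure (count_space UNIV) (I \<inter> M)
               \<partial>count_space (edges \<epsilon> R z \<Omega>)) \<partial>lborel)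
          \<partial>(hausdorff_measure (real CARD('n) * (real CARD('n) - 1) / 2) :: (real^'n^'n) measure))
        / emeasure (hausdorff_measure (real CARD('n) * (real CARD('n) - 1) / 2)) (On :: (real^'n^'n) set)
        \<le> ennreal c * hausdorff_outer (real (CARD('n) - 1)) M)"
proof (intro exI[of _ "real CARD('n) * Kc CARD('n)"] conjI allI impI)
  show "real CARD('n) * Kc CARD('n) > 0"
    unfolding Kc_def using hball_const_pos[of "real (CARD('n) - 1)"] by simp
  fix \<Omega> M :: "(real^'n) set" and \<epsilon> :: real
  assume e: "\<epsilon> > 0"
  have On: "On \<in> sets (hausdorff_measure (real CARD('n) * (real CARD('n) - 1) / 2) :: (real^'n^'n) measure)"
    unfolding sets_hausdorff using On_closed by (rule borel_closed)
  show "(\<integral>\<^sup>+ R \<in> On. (\<integral>\<^sup>+ z \<in> unit_cube.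
            (\<integral>\<^sup>+ I. ennreal (\<epsilon> ^ (CARD('n) - 1)) * emeasure (count_space UNIV) (I \<inter> M)
               \<partial>count_space (edges \<epsilon> R z \<Omega>)) \<partial>lborel)
          \<partial>(hausdorff_measure (real CARD('n) * (real CARD('n) - 1) / 2) :: (real^'n^'n) measure))
        / emeasure (hausdorff_measure (real CARD('n) * (real CARD('n) - 1) / 2)) (On :: (real^'n^'n) set)
        \<le> ennreal (real CARD('n) * Kc CARD('n)) * hausdorff_outer (real (CARD('n) - 1)) M"
    by (rule avg_bound[OF On perR]) (use e in \<open>auto simp: On_def\<close>)
qed

end
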